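(* Let $\epsilon\in(0,1)$, let $x:\mathcal{A}\to(0,1)$ be given, and put $\gamma:=\frac{\log_2 M}{\epsilon}$. Let $T$ be a table and $C_T$ the event-log of Algorithm 2 on $T$. If a partial witness tree of weight at least $\gamma$, all of whose non-root vertices $v$ satisfy $x'([v])\ge\frac{1}{4m}$, occurs in $C_T$, then a partial witness tree of weight in $[\gamma,2\gamma]$ occurs in $C_T$.
   Context: Setting: $\mathcal{P}=\{P_1,\dots,P_n\}$ is a finite set of mutually independent discrete random variables with finite domains; $\mathcal{A}$ is a set of $m$ events determined by them; $\mathrm{vbl}(A)$ is the minimal set of variables determining $A$; the dependency graph joins $A\neq B$ iff $\mathrm{vbl}(A)\cap\mathrm{vbl}(B)\neq\emptyset$; $\Gamma(A)$ is the neighborhood and $\Gamma^+(A)=\Gamma(A)\cup\{A\}$. $x'(A)=x(A)\prod_{B\in\Gamma(A)}(1-x(B))$; $\overline{\mathcal{A}}=\{A: x'(A)\ge\frac{1}{4m}\}$; $M=\max\{n,4m,4\sum_{A\in\overline{\mathcal{A}}}\frac{2|\mathrm{vbl}(A)|}{x'(A)}\cdot\frac{x(A)}{1-x(A)}\}$. Binary trees: for each $A$ a rooted binary tree $\mathbb{B}_A$ is fixed, with vertices labeled by nonempty subsets of $\mathrm{vbl}(A)$: root labeled $\mathrm{vbl}(A)$, leaves labeled by singletons, each non-leaf vertex has two children with disjoint labels whose union is its label; $\mathbb{B}_A$ also denotes the set of labels. Partial witness tree: finite rooted tree, root labeled by some $S\in\mathbb{B}_A$ ($A\in\mathcal{A}$),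 other vertices labeled by events; children of the root are labeled by events $B$ with $\mathrm{vbl}(B)\cap S\ne\emptyset$; children of a non-root vertex labeled $B$ are labeled by elements of $\Gamma^+(B)$. $[v]$ denotes the label of a non-root vertex $v$. The weight of an event is $w(A)=-\log_2x'(A)$ and the weight of a partial witness tree is the sum of $w([v])$ over its non-root vertices $v$. Table and log: $T$ gives for each variable $p$ a sequence $T(p,1),T(p,2),\dots$ of values. Algorithm 2: pointers $t_p=1$; while some event happens under $p=T(p,t_p)$ for all $p$, pick one such event $A$ by a fixed deterministic rule and increment $t_p$ for all $p\in\mathrm{vbl}(A)$. The event-log $C_T(1),C_T(2),\dots$ lists the picked events. For a log $C$, step $t$ and $S\in\mathbb{B}_{C(t)}$, $\tau_C(t,S)$ is built by starting with a root labeled $S$ and, for $i=t-1,\dots,1$: if some non-root vertex $v$ has $C(i)\in\Gamma^+([v])$, attach a child labeled $C(i)$ to such a $v$ of maximum depth (ties arbitrary); else if $S\cap\mathrm{vbl}(C(i))\ne\emptyset$, attach a child labeled $C(i)$ to the root; else do nothing. A partial witness tree $\tau_S$ occurs in $C$ if $\tau_S=\tau_C(t,S)$ for some $t$ with $S\in\mathbb{B}_{C(t)}$. *)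

theory Defs
  imports Complex_Main
begin

text \<open>Variables are the elements of a finite type 'v; variable p takes values in the
finite nonempty domain D p. An event is a set of total assignments (elements of {\<sigma>. \<forall>p. \<sigma> p \<in> D p}).\<close>

definition determines :: "('v \<Rightarrow> 'd set) \<Rightarrow> 'v set \<Rightarrow> ('v \<Rightarrow> 'd) set \<Rightarrow> bool" where
  "determines D S A \<longleftrightarrow>
     (\<forall>\<sigma>\<in>{\<sigma>. \<forall>p. \<sigma> p \<in> D p}. \<forall>\<tau>\<in>{\<sigma>. \<forall>p. \<sigma> p \<in> D p}. (\<forall>p\<in>S. \<sigma> p = \<tau> p) \<longrightarrow> (\<sigma> \<in> A \<longleftrightarrow> \<tau> \<in> A))"

text \<open>The minimal set of variables determining A (the intersection of all determining sets;
on a product space this intersection is itself determining).\<close>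
definition vbl :: "('v \<Rightarrow> 'd set) \<Rightarrow> ('v \<Rightarrow> 'd) set \<Rightarrow> 'v set" where
  "vbl D A = \<Inter>{S. determines D S A}"

definition Gamma :: "('v \<Rightarrow> 'd set) \<Rightarrow> ('v \<Rightarrow> 'd) set set \<Rightarrow> ('v \<Rightarrow> 'd) set \<Rightarrow> ('v \<Rightarrow> 'd) set set" where
  "Gamma D \<A> A = {B \<in> \<A>. B \<noteq> A \<and> vbl D A \<inter> vbl D B \<noteq> {}}"

definition Gamma_plus :: "('v \<Rightarrow> 'd set) \<Rightarrow> ('v \<Rightarrow> 'd) set set \<Rightarrow> ('v \<Rightarrow> 'd) set \<Rightarrow> ('v \<Rightarrow> 'd) set set" where
  "Gamma_plus D \<A> A = insert A (Gamma D \<A> A)"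

definition xprime :: "('v \<Rightarrow> 'd set) \<Rightarrow> ('v \<Rightarrow> 'd) set set \<Rightarrow> (('v \<Rightarrow> 'd) set \<Rightarrow> real)
    \<Rightarrow> ('v \<Rightarrow> 'd) set \<Rightarrow> real" where
  "xprime D \<A> x A = x A * (\<Prod>B\<in>Gamma D \<A> A. (1 - x B))"

definition ev_weight :: "('v \<Rightarrow> 'd set) \<Rightarrow> ('v \<Rightarrow> 'd) set set \<Rightarrow> (('v \<Rightarrow> 'd) set \<Rightarrow> real)
    \<Rightarrow> ('v \<Rightarrow> 'd) set \<Rightarrow> real" where
  "ev_weight D \<A> x A = - log 2 (xprime D \<A> x A)"

definition Abar :: "('v \<Rightarrow> 'd set) \<Rightarrow> ('v \<Rightarrow> 'd) set set \<Rightarrow> (('v \<Rightarrow> 'd) set \<Rightarrow> real)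
    \<Rightarrow> ('v \<Rightarrow> 'd) set set" where
  "Abar D \<A> x = {A \<in> \<A>. xprime D \<A> x A \<ge> 1 / (4 * real (card \<A>))}"

definition Mconst :: "('v::finite \<Rightarrow> 'd set) \<Rightarrow> ('v \<Rightarrow> 'd) set set \<Rightarrow> (('v \<Rightarrow> 'd) set \<Rightarrow> real) \<Rightarrow> real" where
  "Mconst D \<A> x = max (real (card (UNIV :: 'v set))) (max (4 * real (card \<A>))
     (4 * (\<Sum>A\<in>Abar D \<A> x. (2 * real (card (vbl D A)) / xprime D \<A> x A) * (x A / (1 - x A)))))"

datatype 'a btree = BLeaf 'a | BNode 'a "'a btree" "'a btree"

fun bt_label :: "'a btree \<Rightarrow> 'a" where
  "bt_label (BLeaf a) = a"
| "bt_label (BNode a l r) = a"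

fun bt_labels :: "'a btree \<Rightarrow> 'a set" where
  "bt_labels (BLeaf a) = {a}"
| "bt_labels (BNode a l r) = insert a (bt_labels l \<union> bt_labels r)"

fun bt_valid :: "'v set btree \<Rightarrow> bool" where
  "bt_valid (BLeaf S) \<longleftrightarrow> (\<exists>p. S = {p})"
| "bt_valid (BNode S l r) \<longleftrightarrow> S \<noteq> {} \<and> bt_label l \<inter> bt_label r = {}
      \<and> bt_label l \<union> bt_label r = S \<and> bt_valid l \<and> bt_valid r"

text \<open>Given the list h of events picked so far, the pointer of variable p is
1 + number of picked events containing p; the current assignment is p |-> T p (t_p).\<close>
definition alg_ptr :: "('v \<Rightarrow> 'd set) \<Rightarrow> ('v \<Rightarrow> 'd) set list \<Rightarrow> 'v \<Rightarrow> nat" where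
  "alg_ptr D h p = 1 + length (filter (\<lambda>A. p \<in> vbl D A) h)"

definition alg_assign :: "('v \<Rightarrow> 'd set) \<Rightarrow> ('v \<Rightarrow> nat \<Rightarrow> 'd) \<Rightarrow> ('v \<Rightarrow> 'd) set list \<Rightarrow> 'v \<Rightarrow> 'd" where
  "alg_assign D T h = (\<lambda>p. T p (alg_ptr D h p))"

definition alg_happening :: "('v \<Rightarrow> 'd set) \<Rightarrow> ('v \<Rightarrow> 'd) set set \<Rightarrow> ('v \<Rightarrow> nat \<Rightarrow> 'd)
    \<Rightarrow> ('v \<Rightarrow> 'd) set list \<Rightarrow> ('v \<Rightarrow> 'd) set set" where
  "alg_happening D \<A> T h = {A \<in> \<A>. alg_assign D T h \<in> A}"

text \<open>alg_log D A T sel k = Some h iff Algorithm 2 performs at least k steps, h being the list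
[C_T(1),...,C_T(k)]; sel is the fixed deterministic selection rule (it may depend on the history).\<close>
fun alg_log :: "('v \<Rightarrow> 'd set) \<Rightarrow> ('v \<Rightarrow> 'd) set set \<Rightarrow> ('v \<Rightarrow> nat \<Rightarrow> 'd)
    \<Rightarrow> (('v \<Rightarrow> 'd) set list \<Rightarrow> ('v \<Rightarrow> 'd) set set \<Rightarrow> ('v \<Rightarrow> 'd) set) \<Rightarrow> nat
    \<Rightarrow> ('v \<Rightarrow> 'd) set list option" where
  "alg_log D \<A> T sel 0 = Some []"
| "alg_log D \<A> T sel (Suc k) = (case alg_log D \<A> T sel k of
      None \<Rightarrow> None
    | Some h \<Rightarrow> (if alg_happening D \<A> T h = {} then None
                 else Some (h @ [sel h (alg_happening D \<A> T h)])))"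

text \<open>The tree is represented with the steps as vertex names: the root is 0, a non-root vertex
is the step i whose event C(i) labels it; the state is (V, par, dep): set of non-root vertices,
parent map (0 = root), depth map. tb is the (arbitrary) tie-breaking rule among candidate
vertices of maximum depth.\<close>
definition tau_step :: "('v \<Rightarrow> 'd set) \<Rightarrow> ('v \<Rightarrow> 'd) set set \<Rightarrow> (nat \<Rightarrow> ('v \<Rightarrow> 'd) set)
    \<Rightarrow> 'v set \<Rightarrow> (nat set \<Rightarrow> nat) \<Rightarrow> nat
    \<Rightarrow> nat set \<times> (nat \<Rightarrow> nat) \<times> (nat \<Rightarrow> nat) \<Rightarrow> nat set \<times> (nat \<Rightarrow> nat) \<times> (nat \<Rightarrow> nat)" where
  "tau_step D \<A> C S tb i st = (case st of (V, par, dep) \<Rightarrow>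
     (let cand = {v \<in> V. C i \<in> Gamma_plus D \<A> (C v)} in
      if cand \<noteq> {} then
        (let d = Max (dep ` cand); v = tb {u \<in> cand. dep u = d} in
         (insert i V, par(i := v), dep(i := d + 1)))
      else if S \<inter> vbl D (C i) \<noteq> {} then (insert i V, par(i := 0), dep(i := 1))
      else (V, par, dep)))"

definition tau :: "('v \<Rightarrow> 'd set) \<Rightarrow> ('v \<Rightarrow> 'd) set set \<Rightarrow> (nat \<Rightarrow> ('v \<Rightarrow> 'd) set)
    \<Rightarrow> (nat \<Rightarrow> 'v set \<Rightarrow> nat \<Rightarrow> nat set \<Rightarrow> nat) \<Rightarrow> nat \<Rightarrow> 'v set
    \<Rightarrow> nat set \<times> (nat \<Rightarrow> nat) \<times> (nat \<Rightarrow> nat)" where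
  "tau D \<A> C tb t S =
     foldl (\<lambda>st i. tau_step D \<A> C S (tb t S i) i st) ({}, \<lambda>_. 0, \<lambda>_. 0) (rev [1..<t])"

definition pwt_weight :: "('v \<Rightarrow> 'd set) \<Rightarrow> ('v \<Rightarrow> 'd) set set \<Rightarrow> (('v \<Rightarrow> 'd) set \<Rightarrow> real)
    \<Rightarrow> (nat \<Rightarrow> ('v \<Rightarrow> 'd) set) \<Rightarrow> nat set \<Rightarrow> real" where
  "pwt_weight D \<A> x C V = (\<Sum>v\<in>V. ev_weight D \<A> x (C v))"

text \<open>A partial witness tree satisfying property P occurs in the log C_T: there is a step t of
the log and S in B_{C_T(t)} such that tau_{C_T}(t,S) satisfies P. The property P receives the
labelling (step i |-> C_T(i)) and the non-root vertex set of the tree.\<close>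
definition pwt_occurs :: "('v \<Rightarrow> 'd set) \<Rightarrow> ('v \<Rightarrow> 'd) set set \<Rightarrow> ('v \<Rightarrow> nat \<Rightarrow> 'd)
    \<Rightarrow> (('v \<Rightarrow> 'd) set list \<Rightarrow> ('v \<Rightarrow> 'd) set set \<Rightarrow> ('v \<Rightarrow> 'd) set)
    \<Rightarrow> (('v \<Rightarrow> 'd) set \<Rightarrow> 'v set btree)
    \<Rightarrow> (nat \<Rightarrow> 'v set \<Rightarrow> nat \<Rightarrow> nat set \<Rightarrow> nat)
    \<Rightarrow> ((nat \<Rightarrow> ('v \<Rightarrow> 'd) set) \<Rightarrow> nat set \<Rightarrow> bool) \<Rightarrow> bool" where
  "pwt_occurs D \<A> T sel B tb P \<longleftrightarrow>
     (\<exists>t h S. 1 \<le> t \<and> alg_log D \<A> T sel t = Some h \<and> S \<in> bt_labels (B (h ! (t - 1))) \<and>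
        P (\<lambda>i. h ! (i - 1)) (fst (tau D \<A> (\<lambda>i. h ! (i - 1)) tb t S)))"

end

theory Submission
  imports Defs
begin

definition stepV :: "('v \<Rightarrow> 'd set) \<Rightarrow> ('v \<Rightarrow> 'd) set set \<Rightarrow> (nat \<Rightarrow> ('v \<Rightarrow> 'd) set) \<Rightarrow> 'v set \<Rightarrow> nat \<Rightarrow> nat set \<Rightarrow> nat set" where
  "stepV D \<A> C S i V = (if (\<exists>v\<in>V. C i \<in> Gamma_plus D \<A> (C v)) \<or> S \<inter> vbl D (C i) \<noteq> {} then insert i V else V)"

lemma fst_tau_step: "fst (tau_step D \<A> C S tb' i st) = stepV D \<A> C S i (fst st)"
  by (cases st) (auto simp: tau_step_def stepV_def Let_def)

lemma fst_foldl: "fst (foldl (\<lambda>st i. tau_step D \<A> C S (f i) i st) st xs) = foldl (\<lambda>V i. stepV D \<A> C S i V) (fst st) xs"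
  by (induction xs arbitrary: st) (simp_all add: fst_tau_step)

definition Vt :: "('v \<Rightarrow> 'd set) \<Rightarrow> ('v \<Rightarrow> 'd) set set \<Rightarrow> (nat \<Rightarrow> ('v \<Rightarrow> 'd) set) \<Rightarrow> nat \<Rightarrow> 'v set \<Rightarrow> nat set" where "Vt D \<A> C t S = foldl (\<lambda>V i. stepV D \<A> C S i V) {} (rev [1..<t])"

lemma fst_tau: "fst (tau D \<A> C tb t S) = Vt D \<A> C t S"
  unfolding tau_def Vt_def by (subst fst_foldl) simp

definition good :: "('v \<Rightarrow> 'd set) \<Rightarrow> ('v \<Rightarrow> 'd) set set \<Rightarrow> (nat \<Rightarrow> ('v \<Rightarrow> 'd) set) \<Rightarrow> nat \<Rightarrow> 'v set \<Rightarrow> nat set \<Rightarrow> bool" where "good D \<A> C t S V \<longleftrightarrow> V = {i. 1 \<le> i \<and> i < t \<and> (S \<inter> vbl D (C i) \<noteq> {} \<or> (\<exists>j\<in>V. i < j \<and> C i \<in> Gamma_plus D \<A> (C j)))}"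

lemma good_mem: "good D \<A> C t S V \<Longrightarrow> i \<in> V \<longleftrightarrow> (1 \<le> i \<and> i < t \<and> (S \<inter> vbl D (C i) \<noteq> {} \<or> (\<exists>j\<in>V. i < j \<and> C i \<in> Gamma_plus D \<A> (C j))))"
proof -
  assume h: "good D \<A> C t S V"
  have "(i \<in> V) = (i \<in> {i. 1 \<le> i \<and> i < t \<and> (S \<inter> vbl D (C i) \<noteq> {} \<or> (\<exists>j\<in>V. i < j \<and> C i \<in> Gamma_plus D \<A> (C j)))})"
    by (rule arg_cong[where f="(\<in>) i", OF h[unfolded good_def]])
  thus ?thesis by simp
qed

lemma step_char:
  assumes mem: "\<And>i. i \<in> V \<longleftrightarrow> (Suc k \<le> i \<and> i < t \<and> (S \<inter> vbl D (C i) \<noteq> {} \<or> (\<exists>j\<in>V. i < j \<and> C i \<in> Gamma_plus D \<A> (C j))))"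
    and kt: "k < t"
  shows "stepV D \<A> C S k V = {i. k \<le> i \<and> i < t \<and> (S \<inter> vbl D (C i) \<noteq> {} \<or> (\<exists>j\<in>stepV D \<A> C S k V. i < j \<and> C i \<in> Gamma_plus D \<A> (C j)))}"
proof (rule set_eqI)
  fix i
  have gt: "\<forall>j\<in>V. k < j"
  proof
    fix j assume "j \<in> V" then show "k < j" using mem[of j] by linarith
  qed
  show "i \<in> stepV D \<A> C S k V \<longleftrightarrow> i \<in> {i. k \<le> i \<and> i < t \<and> (S \<inter> vbl D (C i) \<noteq> {} \<or> (\<exists>j\<in>stepV D \<A> C S k V. i < j \<and> C i \<in> Gamma_plus D \<A> (C j)))}"
  proof (cases "i = k")
    case True
    have "k \<notin> V" using gt by auto
    then show ?thesis using True kt gt unfolding stepV_def by auto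
  next
    case False
    have "(\<exists>j\<in>stepV D \<A> C S k V. i < j \<and> C i \<in> Gamma_plus D \<A> (C j)) \<longleftrightarrow> (\<exists>j\<in>V. i < j \<and> C i \<in> Gamma_plus D \<A> (C j))"
      if "k < i" using that unfolding stepV_def by auto
    moreover have "i \<in> stepV D \<A> C S k V \<longleftrightarrow> i \<in> V" using False unfolding stepV_def by auto
    ultimately show ?thesis using mem[of i] False by (cases "k < i") auto
  qed
qed

lemma Vt_inv: "k \<le> t \<Longrightarrow> foldl (\<lambda>V i. stepV D \<A> C S i V) {} (rev [k..<t]) =
   {i. k \<le> i \<and> i < t \<and> (S \<inter> vbl D (C i) \<noteq> {} \<or> (\<exists>j\<in>foldl (\<lambda>V i. stepV D \<A> C S i V) {} (rev [k..<t]). i < j \<and> C i \<in> Gamma_plus D \<A> (C j)))}"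
proof (induction "t - k" arbitrary: k)
  case 0
  then show ?case by auto
next
  case (Suc n)
  let ?F = "\<lambda>k. foldl (\<lambda>V i. stepV D \<A> C S i V) {} (rev [k..<t])"
  have kt: "k < t" using Suc by simp
  have IH: "?F (Suc k) = {i. Suc k \<le> i \<and> i < t \<and> (S \<inter> vbl D (C i) \<noteq> {} \<or> (\<exists>j\<in>?F (Suc k). i < j \<and> C i \<in> Gamma_plus D \<A> (C j)))}"
    using Suc by simp
  have eq: "?F k = stepV D \<A> C S k (?F (Suc k))"
    using kt by (simp add: upt_conv_Cons)
  have mem: "i \<in> ?F (Suc k) \<longleftrightarrow> (Suc k \<le> i \<and> i < t \<and> (S \<inter> vbl D (C i) \<noteq> {} \<or> (\<exists>j\<in>?F (Suc k). i < j \<and> C i \<in> Gamma_plus D \<A> (C j))))" for i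
  proof -
    have "(i \<in> ?F (Suc k)) = (i \<in> {i. Suc k \<le> i \<and> i < t \<and> (S \<inter> vbl D (C i) \<noteq> {} \<or> (\<exists>j\<in>?F (Suc k). i < j \<and> C i \<in> Gamma_plus D \<A> (C j)))})"
      by (rule arg_cong[where f="(\<in>) i", OF IH])
    thus ?thesis by (simp only: mem_Collect_eq)
  qed
  show ?case unfolding eq by (rule step_char[OF mem kt])
qed

lemma Vt_good: "good D \<A> C t S (Vt D \<A> C t S)"
proof (cases "t = 0")
  case True
  then show ?thesis by (simp add: good_def Vt_def)
next
  case False
  then show ?thesis using Vt_inv[of 1 t D \<A> C S] by (simp add: good_def Vt_def)
qed

lemma good_unique:
  assumes g1: "good D \<A> C t S V1" and g2: "good D \<A> C t S V2"
  shows "V1 = V2"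
proof -
  have "\<forall>i. t - i = n \<longrightarrow> (i \<in> V1 \<longleftrightarrow> i \<in> V2)" for n
  proof (induction n rule: less_induct)
    case (less n)
    show ?case
    proof (intro allI impI)
      fix i assume tn: "t - i = n"
      have eq: "\<forall>j>i. j \<in> V1 \<longleftrightarrow> j \<in> V2"
      proof (intro allI impI)
        fix j assume "i < j"
        show "j \<in> V1 \<longleftrightarrow> j \<in> V2"
        proof (cases "j < t")
          case True
          then show ?thesis using less[of "t - j"] tn \<open>i < j\<close> by auto
        next
          case False
          then show ?thesis using good_mem[OF g1, of j] good_mem[OF g2, of j] by auto
        qed
      qed
      show "i \<in> V1 \<longleftrightarrow> i \<in> V2"
        using good_mem[OF g1, of i] good_mem[OF g2, of i] eq by blast
    qed
  qed
  thus ?thesis by blast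
qed

lemma Vt_sub: "Vt D \<A> C t S \<subseteq> {1..<t}"
proof
  fix x assume "x \<in> Vt D \<A> C t S" then show "x \<in> {1..<t}" using good_mem[OF Vt_good[of D \<A> C t S], of x] by auto
qed

lemma Vt_Un: "Vt D \<A> C t (S1 \<union> S2) = Vt D \<A> C t S1 \<union> Vt D \<A> C t S2"
proof (rule good_unique[OF Vt_good])
  note g1 = good_mem[OF Vt_good[of D \<A> C t S1]]
  note g2 = good_mem[OF Vt_good[of D \<A> C t S2]]
  show "good D \<A> C t (S1 \<union> S2) (Vt D \<A> C t S1 \<union> Vt D \<A> C t S2)"
    unfolding good_def
    apply (rule set_eqI)
    subgoal for i using g1[of i] g2[of i] by auto
    done
qed

lemma Vt_cong:
  assumes "\<forall>i. 1 \<le> i \<and> i < t \<longrightarrow> C i = C' i"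
  shows "Vt D \<A> C' t S = Vt D \<A> C t S"
proof (rule good_unique[OF _ Vt_good])
  note g = good_mem[OF Vt_good[of D \<A> C' t S]]
  have sub: "\<forall>j\<in>Vt D \<A> C' t S. 1 \<le> j \<and> j < t" using g by blast
  show "good D \<A> C t S (Vt D \<A> C' t S)"
    unfolding good_def
  proof (rule set_eqI)
    fix i
    show "i \<in> Vt D \<A> C' t S \<longleftrightarrow> i \<in> {i. 1 \<le> i \<and> i < t \<and> (S \<inter> vbl D (C i) \<noteq> {} \<or> (\<exists>j\<in>Vt D \<A> C' t S. i < j \<and> C i \<in> Gamma_plus D \<A> (C j)))}"
    proof (cases "1 \<le> i \<and> i < t")
      case True
      have "\<forall>j\<in>Vt D \<A> C' t S. C j = C' j" using sub assms by blast
      then show ?thesis using g[of i] True assms by auto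
    next
      case False
      then show ?thesis using g[of i] by auto
    qed
  qed
qed

lemma Vt_empty:
  assumes "\<forall>i. 1 \<le> i \<and> i < t \<longrightarrow> p \<notin> vbl D (C i)"
  shows "Vt D \<A> C t {p} = {}"
proof (rule good_unique[OF Vt_good])
  show "good D \<A> C t {p} {}" unfolding good_def using assms by auto
qed

lemma Vt_single:
  assumes A: "\<forall>i. 1 \<le> i \<and> i < t \<longrightarrow> C i \<in> \<A>"
    and ne: "{i. 1 \<le> i \<and> i < t \<and> p \<in> vbl D (C i)} \<noteq> {}"
    and i0: "i0 = Max {i. 1 \<le> i \<and> i < t \<and> p \<in> vbl D (C i)}"
  shows "Vt D \<A> C t {p} = insert i0 (Vt D \<A> C i0 (vbl D (C i0)))"
proof (rule good_unique[OF Vt_good])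
  let ?P = "{i. 1 \<le> i \<and> i < t \<and> p \<in> vbl D (C i)}"
  have fin: "finite ?P" by (rule finite_subset[of _ "{..<t}"]) auto
  have i0P: "i0 \<in> ?P" using Max_in[OF fin ne] i0 by simp
  have mx: "\<And>i. i \<in> ?P \<Longrightarrow> i \<le> i0" using Max_ge[OF fin] i0 by simp
  note g = good_mem[OF Vt_good[of D \<A> C i0 "vbl D (C i0)"]]
  let ?V = "Vt D \<A> C i0 (vbl D (C i0))"
  have rel: "\<And>i. 1 \<le> i \<Longrightarrow> i < t \<Longrightarrow> C i \<in> Gamma_plus D \<A> (C i0) \<longleftrightarrow> vbl D (C i0) \<inter> vbl D (C i) \<noteq> {}"
    using A i0P by (auto simp: Gamma_plus_def Gamma_def)
  show "good D \<A> C t {p} (insert i0 ?V)"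
    unfolding good_def
  proof (rule set_eqI)
    fix i
    show "i \<in> insert i0 ?V \<longleftrightarrow> i \<in> {i. 1 \<le> i \<and> i < t \<and> ({p} \<inter> vbl D (C i) \<noteq> {} \<or> (\<exists>j\<in>insert i0 ?V. i < j \<and> C i \<in> Gamma_plus D \<A> (C j)))}"
    proof (cases i0 i rule: linorder_cases)
      case less
      have "i \<notin> ?V" using g[of i] less by auto
      moreover have "\<forall>j\<in>?V. j < i"
      proof
        fix j assume "j \<in> ?V" then show "j < i" using g[of j] less by linarith
      qed
      moreover have "i \<notin> ?P"
      proof
        assume "i \<in> ?P" then have "i \<le> i0" by (rule mx)
        with less show False by simp
      qed
      ultimately show ?thesis using less by auto
    next
      case equal
      then show ?thesis using i0P by auto
    next
      case greater
      have it: "i < t" using greater i0P by auto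
      show ?thesis
      proof (cases "1 \<le> i")
        case True
        have "{p} \<inter> vbl D (C i) \<noteq> {} \<Longrightarrow> vbl D (C i0) \<inter> vbl D (C i) \<noteq> {}" using i0P by auto
        then show ?thesis using g[of i] greater it True rel[OF True it] by auto
      next
        case False
        then show ?thesis using g[of i] greater by auto
      qed
    qed
  qed
qed

lemma bt_label_ne: "bt_valid t \<Longrightarrow> bt_label t \<noteq> {}" by (cases t) auto
lemma bt_label_in: "bt_label t \<in> bt_labels t" by (cases t) auto

lemma bt_split: "bt_valid t \<Longrightarrow> S \<in> bt_labels t \<Longrightarrow> (\<exists>p. S = {p}) \<or>
   (\<exists>S1 S2. S1 \<in> bt_labels t \<and> S2 \<in> bt_labels t \<and> S = S1 \<union> S2 \<and> S1 \<subset> S \<and> S2 \<subset> S)"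
proof (induction t)
  case (BLeaf x)
  then show ?case by simp
next
  case (BNode a l r)
  have vl: "bt_valid l" "bt_valid r" using BNode.prems(1) by simp_all
  have sub: "bt_labels l \<subseteq> bt_labels (BNode a l r)" "bt_labels r \<subseteq> bt_labels (BNode a l r)" by auto
  show ?case
  proof (cases "S = a")
    case True
    have ne: "bt_label l \<noteq> {}" "bt_label r \<noteq> {}" using vl bt_label_ne by auto
    have dj: "bt_label l \<inter> bt_label r = {}" and un: "bt_label l \<union> bt_label r = S"
      using BNode.prems(1) True by simp_all
    have "bt_label l \<subset> S" "bt_label r \<subset> S" using ne dj un by blast+
    moreover have "bt_label l \<in> bt_labels (BNode a l r)" "bt_label r \<in> bt_labels (BNode a l r)"
      using sub bt_label_in[of l] bt_label_in[of r] by blast+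
    ultimately show ?thesis using un by blast
  next
    case False
    from BNode.prems(2) False have "S \<in> bt_labels l \<or> S \<in> bt_labels r" by simp
    then show ?thesis
    proof
      assume "S \<in> bt_labels l"
      from BNode.IH(1)[OF vl(1) this] show ?thesis using sub(1) by blast
    next
      assume "S \<in> bt_labels r"
      from BNode.IH(2)[OF vl(2) this] show ?thesis using sub(2) by blast
    qed
  qed
qed

lemma alg_log_props:
  assumes sel: "\<forall>h X. X \<noteq> {} \<longrightarrow> X \<subseteq> \<A> \<longrightarrow> sel h X \<in> X"
  shows "alg_log D \<A> T sel k = Some h \<Longrightarrow> length h = k \<and> set h \<subseteq> \<A> \<and> (\<forall>j\<le>k. alg_log D \<A> T sel j = Some (take j h))"
proof (induction k arbitrary: h)
  case 0
  then show ?case by simp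
next
  case (Suc k)
  obtain h' where h': "alg_log D \<A> T sel k = Some h'"
    using Suc.prems by (cases "alg_log D \<A> T sel k") auto
  let ?X = "alg_happening D \<A> T h'"
  have ne: "?X \<noteq> {}" and h: "h = h' @ [sel h' ?X]" using Suc.prems h' by (auto split: if_splits)
  have XA: "?X \<subseteq> \<A>" by (auto simp: alg_happening_def)
  have "sel h' ?X \<in> ?X" using sel ne XA by blast
  hence sA: "sel h' ?X \<in> \<A>" using XA by blast
  note IH = Suc.IH[OF h']
  have "\<forall>j\<le>Suc k. alg_log D \<A> T sel j = Some (take j h)"
  proof (intro allI impI)
    fix j assume "j \<le> Suc k"
    then consider "j = Suc k" | "j \<le> k" by linarith
    then show "alg_log D \<A> T sel j = Some (take j h)"
    proof cases
      case 1 then show ?thesis using Suc.prems IH h by simp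
    next
      case 2 then show ?thesis using IH h by simp
    qed
  qed
  then show ?case using IH h sA by auto
qed


theorem lemma3p2:
  fixes D :: "'v::finite \<Rightarrow> 'd set"
    and \<A> :: "('v \<Rightarrow> 'd) set set"
    and x :: "('v \<Rightarrow> 'd) set \<Rightarrow> real"
    and B :: "('v \<Rightarrow> 'd) set \<Rightarrow> 'v set btree"
    and T :: "'v \<Rightarrow> nat \<Rightarrow> 'd"
    and sel :: "('v \<Rightarrow> 'd) set list \<Rightarrow> ('v \<Rightarrow> 'd) set set \<Rightarrow> ('v \<Rightarrow> 'd) set"
    and tb :: "nat \<Rightarrow> 'v set \<Rightarrow> nat \<Rightarrow> nat set \<Rightarrow> nat"
    and \<epsilon> \<gamma> :: real
  assumes dom: "\<forall>p. finite (D p) \<and> D p \<noteq> {}"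
    and finA: "finite \<A>"
    and evs: "\<forall>A\<in>\<A>. A \<subseteq> {\<sigma>. \<forall>p. \<sigma> p \<in> D p}"
    and trees: "\<forall>A\<in>\<A>. bt_valid (B A) \<and> bt_label (B A) = vbl D A"
    and eps: "0 < \<epsilon>" "\<epsilon> < 1"
    and xA: "\<forall>A\<in>\<A>. 0 < x A \<and> x A < 1"
    and table: "\<forall>p i. T p i \<in> D p"
    and sel: "\<forall>h X. X \<noteq> {} \<longrightarrow> X \<subseteq> \<A> \<longrightarrow> sel h X \<in> X"
    and tb: "\<forall>t S i X. X \<noteq> {} \<longrightarrow> finite X \<longrightarrow> tb t S i X \<in> X"
    and gamma: "\<gamma> = log 2 (Mconst D \<A> x) / \<epsilon>"
    and occ: "pwt_occurs D \<A> T sel B tb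
                (\<lambda>C V. pwt_weight D \<A> x C V \<ge> \<gamma> \<and>
                       (\<forall>v\<in>V. xprime D \<A> x (C v) \<ge> 1 / (4 * real (card \<A>))))"
  shows "pwt_occurs D \<A> T sel B tb
           (\<lambda>C V. \<gamma> \<le> pwt_weight D \<A> x C V \<and> pwt_weight D \<A> x C V \<le> 2 * \<gamma>)"
proof -
  obtain t0 h0 S0 where t0: "1 \<le> t0" and log0: "alg_log D \<A> T sel t0 = Some h0"
    and S0: "S0 \<in> bt_labels (B (h0 ! (t0 - 1)))"
    and P0: "pwt_weight D \<A> x (\<lambda>i. h0 ! (i - 1)) (fst (tau D \<A> (\<lambda>i. h0 ! (i - 1)) tb t0 S0)) \<ge> \<gamma>"
    and Q0: "\<forall>v\<in>fst (tau D \<A> (\<lambda>i. h0 ! (i - 1)) tb t0 S0). xprime D \<A> x (h0 ! (v - 1)) \<ge> 1 / (4 * real (card \<A>))"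
    using occ unfolding pwt_occurs_def by blast
  define C where "C = (\<lambda>i::nat. h0 ! (i - 1))"
  define m where "m = real (card \<A>)"
  define W where "W = (\<lambda>t S. pwt_weight D \<A> x C (Vt D \<A> C t S))"
  note lp = alg_log_props[OF sel log0]
  have CA: "C i \<in> \<A>" if "1 \<le> i" "i \<le> t0" for i
  proof -
    have "i - 1 < length h0" using lp that by simp
    then show ?thesis using lp unfolding C_def by (meson nth_mem subsetD)
  qed
  have m1: "m \<ge> 1" using CA[OF t0 order.refl] finA unfolding m_def
    by (metis card_0_eq empty_iff less_one not_le of_nat_1 of_nat_le_iff)
  have xp: "0 < xprime D \<A> x A \<and> xprime D \<A> x A \<le> 1" if "A \<in> \<A>" for A
  proof -
    have G: "Gamma D \<A> A \<subseteq> \<A>" unfolding Gamma_def by auto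
    have xB: "\<forall>B\<in>Gamma D \<A> A. 0 < x B \<and> x B < 1" using G xA by blast
    have p1: "0 < (\<Prod>B\<in>Gamma D \<A> A. (1 - x B))" using xB by (intro prod_pos) auto
    have p2: "(\<Prod>B\<in>Gamma D \<A> A. (1 - x B)) \<le> 1" using xB by (intro prod_le_1) auto
    have "x A * (\<Prod>B\<in>Gamma D \<A> A. (1 - x B)) \<le> 1 * 1"
      using xA that p1 p2 by (intro mult_mono) auto
    then show ?thesis using xA that p1 unfolding xprime_def by simp
  qed
  have wpos: "0 \<le> ev_weight D \<A> x A" if "A \<in> \<A>" for A
    using xp[OF that] unfolding ev_weight_def by simp
  have Mge: "4 * m \<le> Mconst D \<A> x" unfolding Mconst_def m_def by simp
  have lM: "log 2 (4 * m) \<le> log 2 (Mconst D \<A> x)" using Mge m1 by simp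
  have lM2: "2 \<le> log 2 (4 * m)"
  proof -
    have "log 2 4 \<le> log 2 (4 * m)" using m1 by simp
    moreover have "log 2 (4::real) = 2"
      by (metis log2_of_power_eq numeral_Bit0 of_nat_numeral power2_eq_square numeral_times_numeral mult_2 power_one_right)
    ultimately show ?thesis by simp
  qed
  have gpos: "\<gamma> > 0" using gamma lM lM2 eps by simp
  have eg: "\<epsilon> * \<gamma> = log 2 (Mconst D \<A> x)" using gamma eps by simp
  have wle: "ev_weight D \<A> x A \<le> \<gamma>" if "A \<in> \<A>" "xprime D \<A> x A \<ge> 1 / (4 * m)" for A
  proof -
    have "log 2 (1 / (4 * m)) \<le> log 2 (xprime D \<A> x A)"
      using that m1 xp[OF that(1)] by (subst log_le_cancel_iff) auto
    moreover have "log 2 (1 / (4 * m)) = - log 2 (4 * m)" using m1 by (simp add: log_divide)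
    ultimately have "ev_weight D \<A> x A \<le> log 2 (4 * m)" unfolding ev_weight_def by simp
    also have "\<dots> \<le> \<epsilon> * \<gamma>" using lM eg by simp
    also have "\<dots> \<le> \<gamma>" using eps gpos by simp
    finally show ?thesis .
  qed
  define K where "K = card (UNIV :: 'v set)"
  have descent: "\<forall>t S. t * (K + 1) + card S = n \<longrightarrow> 1 \<le> t \<longrightarrow> t \<le> t0 \<longrightarrow> S \<in> bt_labels (B (C t)) \<longrightarrow>
      \<gamma> \<le> W t S \<longrightarrow> (\<forall>v\<in>Vt D \<A> C t S. xprime D \<A> x (C v) \<ge> 1 / (4 * m)) \<longrightarrow>
      (\<exists>t' S'. 1 \<le> t' \<and> t' \<le> t0 \<and> S' \<in> bt_labels (B (C t')) \<and> \<gamma> \<le> W t' S' \<and> W t' S' \<le> 2 * \<gamma>)" for n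
  proof (induction n rule: less_induct)
    case (less n)
    show ?case
    proof (intro allI impI)
      fix t S
      assume n: "t * (K + 1) + card S = n" and t1: "1 \<le> t" and tt0: "t \<le> t0"
        and SB: "S \<in> bt_labels (B (C t))" and Wg: "\<gamma> \<le> W t S"
        and Q: "\<forall>v\<in>Vt D \<A> C t S. xprime D \<A> x (C v) \<ge> 1 / (4 * m)"
      show "\<exists>t' S'. 1 \<le> t' \<and> t' \<le> t0 \<and> S' \<in> bt_labels (B (C t')) \<and> \<gamma> \<le> W t' S' \<and> W t' S' \<le> 2 * \<gamma>"
      proof (cases "W t S \<le> 2 * \<gamma>")
        case True
        then show ?thesis using t1 tt0 SB Wg by blast
      next
        case False
        have CtA: "C t \<in> \<A>" using CA t1 tt0 by simp
        have VA: "\<And>t' S' v. t' \<le> t0 \<Longrightarrow> v \<in> Vt D \<A> C t' S' \<Longrightarrow> C v \<in> \<A>"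
          using CA Vt_sub by fastforce
        have finV: "\<And>t' S'. finite (Vt D \<A> C t' S')" using Vt_sub finite_subset by (metis finite_atLeastLessThan)
        from bt_split[of "B (C t)" S] trees CtA SB
        consider (sg) p where "S = {p}" | (un) S1 S2 where "S1 \<in> bt_labels (B (C t))" "S2 \<in> bt_labels (B (C t))"
          "S = S1 \<union> S2" "S1 \<subset> S" "S2 \<subset> S" by blast
        then show ?thesis
        proof cases
          case un
          have VU: "Vt D \<A> C t S = Vt D \<A> C t S1 \<union> Vt D \<A> C t S2" using un Vt_Un by simp
          have nn: "0 \<le> sum (\<lambda>v. ev_weight D \<A> x (C v)) (Vt D \<A> C t S1 \<inter> Vt D \<A> C t S2)"
            using VA tt0 wpos by (intro sum_nonneg) blast
          have "W t S = W t S1 + W t S2 - sum (\<lambda>v. ev_weight D \<A> x (C v)) (Vt D \<A> C t S1 \<inter> Vt D \<A> C t S2)"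
            unfolding W_def pwt_weight_def VU by (rule sum_Un[OF finV finV])
          hence Wle: "W t S \<le> W t S1 + W t S2" using nn by simp
          have fS: "finite S" by simp
          have c1: "card S1 < card S" using psubset_card_mono[OF fS un(4)] .
          have c2: "card S2 < card S" using psubset_card_mono[OF fS un(5)] .
          show ?thesis
          proof (cases "\<gamma> \<le> W t S1")
            case True
            have "t * (K + 1) + card S1 < n" using c1 n by simp
            then show ?thesis using less[of "t * (K + 1) + card S1"] t1 tt0 un(1) True Q VU by blast
          next
            case F: False
            have "\<gamma> \<le> W t S2" using F Wle False by linarith
            moreover have "t * (K + 1) + card S2 < n" using c2 n by simp
            ultimately show ?thesis using less[of "t * (K + 1) + card S2"] t1 tt0 un(2) Q VU by blast
          qed
        next
          case sg
          let ?P = "{i. 1 \<le> i \<and> i < t \<and> p \<in> vbl D (C i)}"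
          show ?thesis
          proof (cases "?P = {}")
            case True
            then have "Vt D \<A> C t S = {}" using sg Vt_empty[of t p D C \<A>] by auto
            then have "W t S = 0" unfolding W_def pwt_weight_def by simp
            then show ?thesis using Wg gpos by simp
          next
            case ne: False
            define i0 where "i0 = Max ?P"
            have fin: "finite ?P" by (rule finite_subset[of _ "{..<t}"]) auto
            have i0P: "i0 \<in> ?P" using Max_in[OF fin ne] i0_def by simp
            have At: "\<forall>i. 1 \<le> i \<and> i < t \<longrightarrow> C i \<in> \<A>" using CA tt0 by simp
            define S' where "S' = vbl D (C i0)"
            have VS: "Vt D \<A> C t S = insert i0 (Vt D \<A> C i0 S')"
              using Vt_single[OF At ne i0_def] sg S'_def by simp
            have notin: "i0 \<notin> Vt D \<A> C i0 S'" using Vt_sub by fastforce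
            have WS: "W t S = ev_weight D \<A> x (C i0) + W i0 S'"
              unfolding W_def pwt_weight_def VS using notin finV by simp
            have i0A: "C i0 \<in> \<A>" using At i0P by simp
            have "ev_weight D \<A> x (C i0) \<le> \<gamma>" using wle[OF i0A] Q VS by simp
            hence Wg': "\<gamma> \<le> W i0 S'" using WS False by linarith
            have S'B: "S' \<in> bt_labels (B (C i0))" using trees i0A bt_label_in S'_def by metis
            have cK: "card S' \<le> K" unfolding K_def by (rule card_mono) auto
            have "Suc i0 * (K + 1) \<le> t * (K + 1)" using i0P by (intro mult_le_mono1) simp
            hence "i0 * (K + 1) + card S' < n" using n cK by simp
            moreover have "\<forall>v\<in>Vt D \<A> C i0 S'. xprime D \<A> x (C v) \<ge> 1 / (4 * m)" using Q VS by simp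
            ultimately show ?thesis using less[of "i0 * (K + 1) + card S'"] i0P tt0 S'B Wg' by auto
          qed
        qed
      qed
    qed
  qed
  have C0: "C t0 = h0 ! (t0 - 1)" unfolding C_def by simp
  have V0: "fst (tau D \<A> C tb t0 S0) = Vt D \<A> C t0 S0" by (rule fst_tau)
  have S0': "S0 \<in> bt_labels (B (C t0))" using S0 C0 by simp
  have P0': "\<gamma> \<le> W t0 S0" using P0[folded C_def] V0 unfolding W_def by simp
  have Q0': "\<forall>v\<in>Vt D \<A> C t0 S0. xprime D \<A> x (C v) \<ge> 1 / (4 * m)"
  proof
    fix v assume "v \<in> Vt D \<A> C t0 S0"
    then have "v \<in> fst (tau D \<A> C tb t0 S0)" using V0 by simp
    then show "xprime D \<A> x (C v) \<ge> 1 / (4 * m)" using Q0[folded C_def] unfolding m_def C_def by simp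
  qed
  obtain t' S' where t': "1 \<le> t'" "t' \<le> t0" "S' \<in> bt_labels (B (C t'))" "\<gamma> \<le> W t' S'" "W t' S' \<le> 2 * \<gamma>"
    using descent[of "t0 * (K + 1) + card S0", THEN spec[where x=t0], THEN spec[where x=S0]] t0 S0' P0' Q0' by blast
  define h' where "h' = take t' h0"
  define C' where "C' = (\<lambda>i::nat. h' ! (i - 1))"
  have len: "length h0 = t0" using lp by simp
  have agree: "\<forall>i. 1 \<le> i \<and> i \<le> t' \<longrightarrow> C i = C' i"
    unfolding C_def C'_def h'_def using len t' by auto
  have log': "alg_log D \<A> T sel t' = Some h'" using lp t' h'_def by simp
  have Vc: "fst (tau D \<A> C' tb t' S') = Vt D \<A> C t' S'"
    using fst_tau[of D \<A> C' tb t' S'] Vt_cong[of t' C C' D \<A> S'] agree by simp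
  have Wc: "pwt_weight D \<A> x C' (Vt D \<A> C t' S') = W t' S'"
    unfolding W_def pwt_weight_def using agree Vt_sub[of D \<A> C t' S']
    by (intro sum.cong) auto
  have last: "h' ! (t' - 1) = C t'" using agree t' unfolding C'_def by simp
  show ?thesis unfolding pwt_occurs_def
    using t' log' last Vc Wc C'_def by (intro exI[of _ t'] exI[of _ h'] exI[of _ S']) auto
qed

end
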